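(* Let $\mathcal A_{\theta(P)}$ be a set of tuples $(P_1,\dots,P_k)$ each satisfying $\mathcal H_{\theta(P)}$, such that for each element the limits $R_T(x,P)$ and $H_T(x,P)$ are continuous and strictly increasing in $x$, and suppose $\sup_x|F_{T_n}(x,\hat P)-H_{T_n}(x,P)|\to0$ and $\sup_x|F_{T_n}(x,\hat P_\Pi)-R_{T_n}(x,\hat P)|\to0$ in probability for each element of $\mathcal A_{\theta(P)}$. For $\alpha\in(0,1)$ consider the permutation test $$\varphi_{F_n}(\alpha)=1[F_{T_n}\{T_n(Z),\hat P\}>R_{F_n}^{-1}(1-\alpha,\hat P)].$$ Then for each $(P_1,\dots,P_k)\in\mathcal A_{\theta(P)}$, $\lim_{n\to\infty}E\{\varphi_{F_n}(\alpha)\}=\alpha$.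
   Context: Setting: $P_1,\dots,P_k$ are distributions on $\mathbb R^{d_P}$; for each $i$, $X_{i1},\dots,X_{in_i}$ are i.i.d. $P_i$, samples jointly independent, $n=\sum n_i$ with $n_i/n\to p_i\in(0,1)$. $Z$ is the $n\times d_P$ matrix stacking the samples (sample $i$ occupying the row index block $\mathcal I_i$). For a permutation $\pi$ of $\{1,\dots,n\}$, $Z_\pi$ is $Z$ with $j$th row replaced by its $\pi(j)$th row, $Z_{\pi i}$ the rows of $Z_\pi$ indexed by $\mathcal I_i$, $\hat P_{\pi i}$ the empirical distribution of $Z_{\pi i}$, $\hat P_\pi=(\hat P_{\pi1},\dots,\hat P_{\pi k})$, $\hat P=\hat P_{\mathrm{id}}$. $\Pi$ is uniform over all $n!$ permutations and independent of $Z$. For a $d$-dimensional functional $\theta$, $\mathcal H_{\theta(P)}$ is the hypothesis $\theta_\ell(P_1)=\dots=\theta_\ell(P_k)$ for all $\ell$. $T_n$ is a real-valued statistic; $H_{T_n}(x,P)=\Pr\{T_n(Z)\le x\}$; $R_{T_n}(x,\hat P)=\frac1{n!}\sum_\pi1\{T_n(Z_\pi)\le x\}$. $H_T(x,P)$ is the limiting distribution function of $T_n(Z)$ and $R_T(x,P)$ the probability limit of $R_{T_n}(x,\hat P)$. $F_{T_n}(x,\hat P_\pi)$ is an estimated distribution function computed from $Z_\pi$. $R_{F_n}(x,\hat P)=\frac1{n!}\sum_\pi 1[F_{T_n}\{T_n(Z_\pi),\hat P_\pi\}\le x]$, and $R_{F_n}^{-1}(u,\hat P)=\inf\{x:R_{F_n}(x,\hat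 P)\ge u\}$. *)

theory Defs
  imports "HOL-Probability.Probability" "HOL-Combinatorics.Permutations"
begin

text \<open>Sample sizes: nn n i is the size n_i of sample i (i < k) when the total size is n.
  Rows of the data matrix are indexed by {..<n}; sample i occupies the consecutive block
  of rows {sum_(l<i) n_l ..< sum_(l<=i) n_l}. grp nn n j is the sample to which row j belongs.\<close>

definition grp :: "(nat \<Rightarrow> nat \<Rightarrow> nat) \<Rightarrow> nat \<Rightarrow> nat \<Rightarrow> nat" where
  "grp nn n j = (LEAST i. j < (\<Sum>l<Suc i. nn n l))"

definition data_law :: "(nat \<Rightarrow> 'a measure) \<Rightarrow> (nat \<Rightarrow> nat \<Rightarrow> nat) \<Rightarrow> nat \<Rightarrow> (nat \<Rightarrow> 'a) measure" where
  "data_law P nn n = PiM {..<n} (\<lambda>j. P (grp nn n j))"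

text \<open>Permutations of {..<n}; Z o pi is the matrix Z_pi (row j replaced by row pi j).\<close>

definition perms :: "nat \<Rightarrow> (nat \<Rightarrow> nat) set" where
  "perms n = {\<pi>. \<pi> permutes {..<n}}"

definition data_perm_law :: "(nat \<Rightarrow> 'a measure) \<Rightarrow> (nat \<Rightarrow> nat \<Rightarrow> nat) \<Rightarrow> nat \<Rightarrow> ((nat \<Rightarrow> 'a) \<times> (nat \<Rightarrow> nat)) measure" where
  "data_perm_law P nn n = data_law P nn n \<Otimes>\<^sub>M measure_pmf (pmf_of_set (perms n))"

definition H_Tn :: "(nat \<Rightarrow> 'a measure) \<Rightarrow> (nat \<Rightarrow> nat \<Rightarrow> nat) \<Rightarrow> (nat \<Rightarrow> (nat \<Rightarrow> 'a) \<Rightarrow> real) \<Rightarrow> nat \<Rightarrow> real \<Rightarrow> real" where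
  "H_Tn P nn T n x = measure (data_law P nn n) {Z \<in> space (data_law P nn n). T n Z \<le> x}"

definition R_Tn :: "(nat \<Rightarrow> (nat \<Rightarrow> 'a) \<Rightarrow> real) \<Rightarrow> nat \<Rightarrow> (nat \<Rightarrow> 'a) \<Rightarrow> real \<Rightarrow> real" where
  "R_Tn T n Z x = (\<Sum>\<pi>\<in>perms n. if T n (Z \<circ> \<pi>) \<le> x then 1 else 0) / fact n"

text \<open>R_{F_n}(x, hat P) = (1/n!) sum_pi 1[F_{T_n}{T_n(Z_pi), hat P_pi} <= x];
  F n Z x is the estimated distribution function F_{T_n}(x, .) computed from the data Z.\<close>

definition R_Fn :: "(nat \<Rightarrow> (nat \<Rightarrow> 'a) \<Rightarrow> real \<Rightarrow> real) \<Rightarrow> (nat \<Rightarrow> (nat \<Rightarrow> 'a) \<Rightarrow> real) \<Rightarrow> nat \<Rightarrow> (nat \<Rightarrow> 'a) \<Rightarrow> real \<Rightarrow> real" where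
  "R_Fn F T n Z x = (\<Sum>\<pi>\<in>perms n. if F n (Z \<circ> \<pi>) (T n (Z \<circ> \<pi>)) \<le> x then 1 else 0) / fact n"

definition R_Fn_inv :: "(nat \<Rightarrow> (nat \<Rightarrow> 'a) \<Rightarrow> real \<Rightarrow> real) \<Rightarrow> (nat \<Rightarrow> (nat \<Rightarrow> 'a) \<Rightarrow> real) \<Rightarrow> nat \<Rightarrow> (nat \<Rightarrow> 'a) \<Rightarrow> real \<Rightarrow> real" where
  "R_Fn_inv F T n Z u = Inf {x. R_Fn F T n Z x \<ge> u}"

definition phi_Fn :: "(nat \<Rightarrow> (nat \<Rightarrow> 'a) \<Rightarrow> real \<Rightarrow> real) \<Rightarrow> (nat \<Rightarrow> (nat \<Rightarrow> 'a) \<Rightarrow> real) \<Rightarrow> real \<Rightarrow> nat \<Rightarrow> (nat \<Rightarrow> 'a) \<Rightarrow> real" where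
  "phi_Fn F T \<alpha> n Z = (if F n Z (T n Z) > R_Fn_inv F T n Z (1 - \<alpha>) then 1 else 0)"

text \<open>Convergence in (outer) probability X_n -> c: for all eps, delta > 0, eventually there is an
  event of probability >= 1 - delta on which |X_n - c| <= eps.\<close>

definition conv_in_prob :: "(nat \<Rightarrow> 'b measure) \<Rightarrow> (nat \<Rightarrow> 'b \<Rightarrow> real) \<Rightarrow> real \<Rightarrow> bool" where
  "conv_in_prob M X c \<longleftrightarrow> (\<forall>\<epsilon>>0. \<forall>\<delta>>0. eventually (\<lambda>n. \<exists>A\<in>sets (M n).
      measure (M n) A \<ge> 1 - \<delta> \<and> (\<forall>\<omega>\<in>A. \<bar>X n \<omega> - c\<bar> \<le> \<epsilon>)) sequentially)"

definition sup_conv0_in_prob :: "(nat \<Rightarrow> 'b measure) \<Rightarrow> (nat \<Rightarrow> 'b \<Rightarrow> real \<Rightarrow> real) \<Rightarrow> bool" where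
  "sup_conv0_in_prob M G \<longleftrightarrow> (\<forall>\<epsilon>>0. \<forall>\<delta>>0. eventually (\<lambda>n. \<exists>A\<in>sets (M n).
      measure (M n) A \<ge> 1 - \<delta> \<and> (\<forall>\<omega>\<in>A. \<forall>x. \<bar>G n \<omega> x\<bar> \<le> \<epsilon>)) sequentially)"

definition cont_strict_cdf :: "(real \<Rightarrow> real) \<Rightarrow> bool" where
  "cont_strict_cdf G \<longleftrightarrow> continuous_on UNIV G \<and> strict_mono G \<and>
     (G \<longlongrightarrow> 0) at_bot \<and> (G \<longlongrightarrow> 1) at_top"

end

theory Submission
  imports Defs
begin

lemma sum_ind: "finite A \<Longrightarrow> (\<Sum>x\<in>A. if P x then 1 else 0::real) = real (card {x\<in>A. P x})"
  by (simp add: sum.If_cases Int_def)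

lemma perms_finite: "finite (perms n)"
  unfolding perms_def by (rule finite_permutations) simp

lemma perms_card: "card (perms n) = fact n"
  unfolding perms_def by (rule card_permutations) simp_all

lemma perms_id: "id \<in> perms n"
  unfolding perms_def by (simp add: permutes_id)

lemma R_Tn_card: "R_Tn T n Z y = real (card {\<pi>\<in>perms n. T n (Z \<circ> \<pi>) \<le> y}) / fact n"
  unfolding R_Tn_def by (simp add: sum_ind perms_finite)

lemma R_Fn_card: "R_Fn F T n Z y = real (card {\<pi>\<in>perms n. F n (Z \<circ> \<pi>) (T n (Z \<circ> \<pi>)) \<le> y}) / fact n"
  unfolding R_Fn_def by (simp add: sum_ind perms_finite)

lemma R_Tn_mono: "y \<le> y' \<Longrightarrow> R_Tn T n Z y \<le> R_Tn T n Z y'"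
  unfolding R_Tn_card
  by (intro divide_right_mono of_nat_mono card_mono) (auto simp: perms_finite)

lemma R_Fn_mono: "y \<le> y' \<Longrightarrow> R_Fn F T n Z y \<le> R_Fn F T n Z y'"
  unfolding R_Fn_card
  by (intro divide_right_mono of_nat_mono card_mono) (auto simp: perms_finite)

lemma card_le_real: "finite B \<Longrightarrow> A \<subseteq> B \<union> C \<Longrightarrow> finite C \<Longrightarrow> real (card A) \<le> real (card B) + real (card C)"
proof -
  assume "finite B" "A \<subseteq> B \<union> C" "finite C"
  then have "card A \<le> card (B \<union> C)" by (intro card_mono) auto
  also have "\<dots> \<le> card B + card C" by (rule card_Un_le)
  finally show ?thesis by linarith
qed

lemma det_upper:
  fixes \<epsilon> s \<gamma> u :: real
  assumes u: "u = 1 - \<alpha>" "0 < \<alpha>" "\<alpha> < 1" and eps: "0 < \<epsilon>" "s \<le> \<epsilon>/2" "\<gamma> \<le> \<epsilon>/2"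
    and yy: "\<bar>R_Tn T n Z yy - (u - 2*\<epsilon>)\<bar> \<le> s"
    and bad: "real (card {\<pi>\<in>perms n. \<exists>x. \<bar>F n (Z\<circ>\<pi>) x - R_Tn T n Z x\<bar> > \<epsilon>}) \<le> \<gamma> * fact n"
    and phi: "phi_Fn F T \<alpha> n Z = 1"
  shows "F n Z (T n Z) > u - 4*\<epsilon>"
proof (rule ccontr)
  assume C: "\<not> F n Z (T n Z) > u - 4*\<epsilon>"
  define I where "I = perms n"
  define V where "V = (\<lambda>\<pi>. F n (Z \<circ> \<pi>) (T n (Z \<circ> \<pi>)))"
  define X where "X = {x. R_Fn F T n Z x \<ge> 1 - \<alpha>}"
  define B where "B = {\<pi>\<in>perms n. \<exists>x. \<bar>F n (Z\<circ>\<pi>) x - R_Tn T n Z x\<bar> > \<epsilon>}"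
  have fI: "finite I" "I \<noteq> {}" using perms_finite perms_id unfolding I_def by auto
  have N: "real (fact n) > 0" by simp
  have inf: "Inf X < F n Z (T n Z)" using phi unfolding phi_Fn_def X_def R_Fn_inv_def
    by (auto split: if_splits)
  have "Max (V ` I) \<in> X"
  proof -
    have "{\<pi>\<in>I. V \<pi> \<le> Max (V ` I)} = I" using fI by auto
    then have "R_Fn F T n Z (Max (V ` I)) = 1"
      unfolding R_Fn_card using perms_card[of n] by (simp add: I_def V_def)
    then show ?thesis unfolding X_def using u by simp
  qed
  then have "X \<noteq> {}" by auto
  from cInf_lessD[OF this inf] obtain x where x: "x \<in> X" "x < F n Z (T n Z)" by auto
  have sub: "{\<pi>\<in>I. V \<pi> \<le> x} \<subseteq> B \<union> {\<pi>\<in>I. T n (Z \<circ> \<pi>) \<le> yy}"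
  proof
    fix \<pi> assume p: "\<pi> \<in> {\<pi>\<in>I. V \<pi> \<le> x}"
    show "\<pi> \<in> B \<union> {\<pi>\<in>I. T n (Z \<circ> \<pi>) \<le> yy}"
    proof (rule ccontr)
      assume nb: "\<pi> \<notin> B \<union> {\<pi>\<in>I. T n (Z \<circ> \<pi>) \<le> yy}"
      then have a: "\<bar>V \<pi> - R_Tn T n Z (T n (Z \<circ> \<pi>))\<bar> \<le> \<epsilon>" "T n (Z \<circ> \<pi>) > yy"
        using p unfolding B_def V_def I_def by (auto simp: not_less)
      have "R_Tn T n Z yy \<le> R_Tn T n Z (T n (Z \<circ> \<pi>))" using a(2) by (intro R_Tn_mono) simp
      then show False using a(1) yy p C x eps by auto
    qed
  qed
  have "real (card {\<pi>\<in>I. V \<pi> \<le> x}) \<le> real (card B) + real (card {\<pi>\<in>I. T n (Z \<circ> \<pi>) \<le> yy})"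
    by (rule card_le_real[OF _ sub]) (use fI in \<open>auto simp: B_def I_def perms_finite\<close>)
  also have "real (card {\<pi>\<in>I. T n (Z \<circ> \<pi>) \<le> yy}) = R_Tn T n Z yy * fact n"
    unfolding R_Tn_card I_def by simp
  finally have 1: "real (card {\<pi>\<in>I. V \<pi> \<le> x}) \<le> \<gamma> * fact n + R_Tn T n Z yy * fact n"
    using bad unfolding B_def by linarith
  have 2: "R_Fn F T n Z x * fact n = real (card {\<pi>\<in>I. V \<pi> \<le> x})"
    unfolding R_Fn_card I_def V_def by simp
  have 3: "u * fact n \<le> R_Fn F T n Z x * fact n" using x(1) u unfolding X_def
    by (intro mult_right_mono) auto
  have "u * fact n \<le> (\<gamma> + R_Tn T n Z yy) * fact n" using 1 2 3 by (simp add: algebra_simps)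
  then have "u \<le> \<gamma> + R_Tn T n Z yy" using N by (simp add: mult_le_cancel_right)
  then show False using yy eps by linarith
qed

lemma det_lower:
  fixes \<epsilon> s \<gamma> u :: real
  assumes u: "u = 1 - \<alpha>" "0 < \<alpha>" "\<alpha> < 1" and eps: "0 < \<epsilon>" "s \<le> \<epsilon>/2" "\<gamma> \<le> \<epsilon>/2"
    and yy: "\<bar>R_Tn T n Z yy - (u + \<epsilon>)\<bar> \<le> s"
    and bad: "real (card {\<pi>\<in>perms n. \<exists>x. \<bar>F n (Z\<circ>\<pi>) x - R_Tn T n Z x\<bar> > \<epsilon>}) \<le> \<gamma> * fact n"
    and V: "F n Z (T n Z) > u + 3*\<epsilon>"
  shows "phi_Fn F T \<alpha> n Z = 1"
proof -
  define I where "I = perms n"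
  define V where "V = (\<lambda>\<pi>. F n (Z \<circ> \<pi>) (T n (Z \<circ> \<pi>)))"
  define X where "X = {x. R_Fn F T n Z x \<ge> 1 - \<alpha>}"
  define B where "B = {\<pi>\<in>perms n. \<exists>x. \<bar>F n (Z\<circ>\<pi>) x - R_Tn T n Z x\<bar> > \<epsilon>}"
  define x0 where "x0 = u + 3*\<epsilon>"
  have fI: "finite I" "I \<noteq> {}" using perms_finite perms_id unfolding I_def by auto
  have N: "real (fact n) > 0" by simp
  have sub: "{\<pi>\<in>I. T n (Z \<circ> \<pi>) \<le> yy} \<subseteq> B \<union> {\<pi>\<in>I. V \<pi> \<le> x0}"
  proof
    fix \<pi> assume p: "\<pi> \<in> {\<pi>\<in>I. T n (Z \<circ> \<pi>) \<le> yy}"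
    show "\<pi> \<in> B \<union> {\<pi>\<in>I. V \<pi> \<le> x0}"
    proof (rule ccontr)
      assume nb: "\<pi> \<notin> B \<union> {\<pi>\<in>I. V \<pi> \<le> x0}"
      then have a: "\<bar>V \<pi> - R_Tn T n Z (T n (Z \<circ> \<pi>))\<bar> \<le> \<epsilon>" "V \<pi> > x0"
        using p unfolding B_def V_def I_def by (auto simp: not_less)
      have "R_Tn T n Z (T n (Z \<circ> \<pi>)) \<le> R_Tn T n Z yy" using p by (intro R_Tn_mono) simp
      then show False using a yy eps unfolding x0_def by auto
    qed
  qed
  have "real (card {\<pi>\<in>I. T n (Z \<circ> \<pi>) \<le> yy}) \<le> real (card B) + real (card {\<pi>\<in>I. V \<pi> \<le> x0})"
    by (rule card_le_real[OF _ sub]) (use fI in \<open>auto simp: B_def I_def perms_finite\<close>)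
  moreover have "real (card {\<pi>\<in>I. T n (Z \<circ> \<pi>) \<le> yy}) = R_Tn T n Z yy * fact n"
    unfolding R_Tn_card I_def by simp
  moreover have 2: "R_Fn F T n Z x0 * fact n = real (card {\<pi>\<in>I. V \<pi> \<le> x0})"
    unfolding R_Fn_card I_def V_def by simp
  ultimately have "R_Tn T n Z yy * fact n \<le> \<gamma> * fact n + R_Fn F T n Z x0 * fact n"
    using bad unfolding B_def by linarith
  then have "R_Tn T n Z yy \<le> \<gamma> + R_Fn F T n Z x0" using N
    by (simp add: mult_le_cancel_right flip: distrib_right)
  then have x0X: "x0 \<in> X" unfolding X_def using yy eps u by simp
  have bdd: "bdd_below X"
  proof (rule bdd_belowI)
    fix x assume x: "x \<in> X"
    show "Min (V ` I) \<le> x"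
    proof (rule ccontr)
      assume "\<not> Min (V ` I) \<le> x"
      moreover have "\<forall>\<pi>\<in>I. Min (V ` I) \<le> V \<pi>" using fI by simp
      ultimately have "{\<pi>\<in>I. V \<pi> \<le> x} = {}" by force
      then have "R_Fn F T n Z x = 0" unfolding R_Fn_card I_def V_def by (simp only: card.empty of_nat_0 div_0)
      then show False using x u unfolding X_def by simp
    qed
  qed
  have "Inf X \<le> x0" by (rule cInf_lower[OF x0X bdd])
  also have "x0 < F n Z (T n Z)" using V unfolding x0_def .
  finally show ?thesis unfolding phi_Fn_def R_Fn_inv_def X_def by simp
qed

lemma phi_char:
  assumes "0 < \<alpha>" "\<alpha> < 1"
  shows "phi_Fn F T \<alpha> n Z = (if (1 - \<alpha>) * fact n \<le> real (card {\<pi>\<in>perms n. F n (Z \<circ> \<pi>) (T n (Z \<circ> \<pi>)) < F n Z (T n Z)}) then 1 else 0)"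
proof -
  define I where "I = perms n"
  define V where "V = (\<lambda>\<pi>. F n (Z \<circ> \<pi>) (T n (Z \<circ> \<pi>)))"
  define X where "X = {x. R_Fn F T n Z x \<ge> 1 - \<alpha>}"
  define W where "W = {\<pi>\<in>I. V \<pi> < F n Z (T n Z)}"
  have fI: "finite I" "I \<noteq> {}" using perms_finite perms_id unfolding I_def by auto
  have N: "real (fact n) > 0" by simp
  have "Inf X < F n Z (T n Z) \<longleftrightarrow> (1 - \<alpha>) * fact n \<le> real (card W)"
  proof
    assume inf: "Inf X < F n Z (T n Z)"
    have "Max (V ` I) \<in> X"
    proof -
      have "{\<pi>\<in>I. V \<pi> \<le> Max (V ` I)} = I" using fI by auto
      then have "R_Fn F T n Z (Max (V ` I)) = 1"
        unfolding R_Fn_card using perms_card[of n] by (simp add: I_def V_def)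
      then show ?thesis unfolding X_def using assms by simp
    qed
    then have "X \<noteq> {}" by auto
    from cInf_lessD[OF this inf] obtain x where x: "x \<in> X" "x < F n Z (T n Z)" by auto
    have "{\<pi>\<in>I. V \<pi> \<le> x} \<subseteq> W" using x unfolding W_def by auto
    then have "card {\<pi>\<in>I. V \<pi> \<le> x} \<le> card W" using fI unfolding W_def by (intro card_mono) auto
    moreover have "R_Fn F T n Z x * fact n = real (card {\<pi>\<in>I. V \<pi> \<le> x})"
      unfolding R_Fn_card I_def V_def by simp
    moreover have "(1 - \<alpha>) * fact n \<le> R_Fn F T n Z x * fact n" using x(1) unfolding X_def
      by (intro mult_right_mono) auto
    ultimately show "(1 - \<alpha>) * fact n \<le> real (card W)" by linarith
  next
    assume c: "(1 - \<alpha>) * fact n \<le> real (card W)"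
    have "card W > 0"
    proof -
      have "(1 - \<alpha>) * fact n > 0" using assms N by simp
      then show ?thesis using c by linarith
    qed
    then have Wne: "W \<noteq> {}" "finite W" using fI card_gt_0_iff by blast+
    define x where "x = Max (V ` W)"
    have xlt: "x < F n Z (T n Z)" unfolding x_def using Wne by (auto simp: W_def)
    have "W \<subseteq> {\<pi>\<in>I. V \<pi> \<le> x}" unfolding x_def using Wne by (auto simp: W_def)
    then have "card W \<le> card {\<pi>\<in>I. V \<pi> \<le> x}" using fI by (intro card_mono) auto
    moreover have "R_Fn F T n Z x * fact n = real (card {\<pi>\<in>I. V \<pi> \<le> x})"
      unfolding R_Fn_card I_def V_def by simp
    ultimately have "(1 - \<alpha>) * fact n \<le> R_Fn F T n Z x * fact n" using c by linarith
    then have xX: "x \<in> X" unfolding X_def using N by (simp add: mult_le_cancel_right)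
    have bdd: "bdd_below X"
    proof (rule bdd_belowI)
      fix x assume x: "x \<in> X"
      show "Min (V ` I) \<le> x"
      proof (rule ccontr)
        assume "\<not> Min (V ` I) \<le> x"
        moreover have "\<forall>\<pi>\<in>I. Min (V ` I) \<le> V \<pi>" using fI by simp
        ultimately have "{\<pi>\<in>I. V \<pi> \<le> x} = {}" by force
        then have "R_Fn F T n Z x = 0" unfolding R_Fn_card I_def V_def by (simp only: card.empty of_nat_0 div_0)
        then show False using x assms unfolding X_def by simp
      qed
    qed
    have "Inf X \<le> x" by (rule cInf_lower[OF xX bdd])
    then show "Inf X < F n Z (T n Z)" using xlt by linarith
  qed
  then show ?thesis unfolding phi_Fn_def R_Fn_inv_def X_def W_def I_def V_def by simp
qed

lemma grp_lt:
  assumes sizes: "(\<Sum>i<k. nn n i) = n" and j: "j < n"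
  shows "grp nn n j < k"
proof -
  have k: "k > 0" using sizes j by (cases k) auto
  have "j < (\<Sum>l<Suc (k - 1). nn n l)" using k sizes j by simp
  then have "grp nn n j \<le> k - 1" unfolding grp_def by (rule Least_le)
  then show ?thesis using k by simp
qed

lemma data_law_props:
  assumes sizes: "(\<Sum>i<k. nn n i) = n"
    and d: "\<And>i. i < k \<Longrightarrow> prob_space (P i) \<and> sets (P i) = sets borel"
  shows "sets (data_law P nn n) = sets (PiM {..<n} (\<lambda>_. borel))"
    and "prob_space (data_law P nn n)"
proof -
  show "sets (data_law P nn n) = sets (PiM {..<n} (\<lambda>_. borel))"
    unfolding data_law_def
    by (rule sets_PiM_cong) (use d grp_lt[of nn n k, OF sizes] in auto)
  show "prob_space (data_law P nn n)"
    unfolding data_law_def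
    by (rule prob_space_PiM) (auto intro: d[THEN conjunct1] grp_lt[of nn n k, OF sizes])
qed

lemma perm_meas:
  assumes "\<pi> \<in> perms n"
  shows "(\<lambda>Z. Z \<circ> \<pi>) \<in> measurable (PiM {..<n} (\<lambda>_. M)) (PiM {..<n} (\<lambda>_. M))"
proof -
  have p: "\<pi> permutes {..<n}" using assms unfolding perms_def by simp
  have "(\<lambda>Z i. Z (\<pi> i)) \<in> measurable (PiM {..<n} (\<lambda>_. M)) (PiM {..<n} (\<lambda>_. M))"
  proof (rule measurable_PiM_single')
    fix i :: nat assume "i \<in> {..<n}"
    then have "\<pi> i \<in> {..<n}" using permutes_in_image[OF p] by simp
    then show "(\<lambda>Z. Z (\<pi> i)) \<in> measurable (PiM {..<n} (\<lambda>_. M)) M"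
      by (rule measurable_component_singleton)
  next
    show "(\<lambda>Z i. Z (\<pi> i)) \<in> space (PiM {..<n} (\<lambda>_. M)) \<rightarrow> (\<Pi>\<^sub>E i\<in>{..<n}. space M)"
    proof
      fix Z assume Z: "Z \<in> space (PiM {..<n} (\<lambda>_. M))"
      show "(\<lambda>i. Z (\<pi> i)) \<in> (\<Pi>\<^sub>E i\<in>{..<n}. space M)"
      proof (rule PiE_I)
        fix i :: nat assume "i \<in> {..<n}"
        then have "\<pi> i \<in> {..<n}" using permutes_in_image[OF p] by simp
        then show "Z (\<pi> i) \<in> space M" using Z by (auto simp: space_PiM)
      next
        fix i :: nat assume "i \<notin> {..<n}"
        then have "\<pi> i = i" using permutes_not_in[OF p] by simp
        then show "Z (\<pi> i) = undefined" using Z \<open>i \<notin> {..<n}\<close> by (auto simp: space_PiM PiE_def extensional_def)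
      qed
    qed
  qed
  then show ?thesis by (simp add: comp_def)
qed

lemma V_meas:
  assumes T: "T n \<in> borel_measurable (PiM {..<n} (\<lambda>_. borel))"
    and F: "(\<lambda>(Z, x). F n Z x) \<in> borel_measurable (PiM {..<n} (\<lambda>_. borel) \<Otimes>\<^sub>M borel)"
  shows "(\<lambda>Z. F n Z (T n Z)) \<in> borel_measurable (PiM {..<n} (\<lambda>_. borel))"
proof -
  have "(\<lambda>Z. (Z, T n Z)) \<in> measurable (PiM {..<n} (\<lambda>_. borel)) (PiM {..<n} (\<lambda>_. borel) \<Otimes>\<^sub>M borel)"
    using T by (intro measurable_Pair) auto
  from measurable_comp[OF this F] show ?thesis by (simp add: comp_def)
qed

lemma Vp_meas:
  assumes T: "T n \<in> borel_measurable (PiM {..<n} (\<lambda>_. borel))"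
    and F: "(\<lambda>(Z, x). F n Z x) \<in> borel_measurable (PiM {..<n} (\<lambda>_. borel) \<Otimes>\<^sub>M borel)"
    and p: "\<pi> \<in> perms n"
  shows "(\<lambda>Z. F n (Z \<circ> \<pi>) (T n (Z \<circ> \<pi>))) \<in> borel_measurable (PiM {..<n} (\<lambda>_. borel))"
  using measurable_comp[OF perm_meas[OF p] V_meas[of T n F, OF T F]] by (simp add: comp_def)

lemma phi_meas:
  assumes T: "T n \<in> borel_measurable (PiM {..<n} (\<lambda>_. borel))"
    and F: "(\<lambda>(Z, x). F n Z x) \<in> borel_measurable (PiM {..<n} (\<lambda>_. borel) \<Otimes>\<^sub>M borel)"
    and a: "0 < \<alpha>" "\<alpha> < 1"
  shows "phi_Fn F T \<alpha> n \<in> borel_measurable (PiM {..<n} (\<lambda>_. borel))"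
proof -
  have e: "phi_Fn F T \<alpha> n = (\<lambda>Z. if (1 - \<alpha>) * fact n \<le> (\<Sum>\<pi>\<in>perms n. if F n (Z \<circ> \<pi>) (T n (Z \<circ> \<pi>)) < F n Z (T n Z) then 1 else 0) then 1 else 0)"
    by (rule ext) (simp add: phi_char[OF a] sum_ind perms_finite)
  have [measurable]: "(\<lambda>Z. F n Z (T n Z)) \<in> borel_measurable (PiM {..<n} (\<lambda>_. borel))"
    by (rule V_meas[of T n F, OF T F])
  have [measurable]: "\<And>\<pi>. \<pi> \<in> perms n \<Longrightarrow> (\<lambda>Z. F n (Z \<circ> \<pi>) (T n (Z \<circ> \<pi>))) \<in> borel_measurable (PiM {..<n} (\<lambda>_. borel))"
    by (rule Vp_meas[of T n F, OF T F])
  show ?thesis unfolding e by measurable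
qed

lemma perm_markov:
  assumes M: "prob_space M"
    and A: "A \<in> sets (M \<Otimes>\<^sub>M measure_pmf (pmf_of_set (perms n)))"
      "measure (M \<Otimes>\<^sub>M measure_pmf (pmf_of_set (perms n))) A \<ge> 1 - \<delta>"
    and g0: "\<gamma> > 0"
  shows "\<exists>B\<in>sets M. measure M B \<ge> 1 - \<delta>/\<gamma> \<and>
           (\<forall>Z\<in>B. real (card {\<pi>\<in>perms n. (Z, \<pi>) \<notin> A}) \<le> \<gamma> * fact n)"
proof -
  interpret M: prob_space M by (rule M)
  define I where "I = perms n"
  have fI: "finite I" "I \<noteq> {}" using perms_finite perms_id unfolding I_def by auto
  define K where "K = measure_pmf (pmf_of_set I)"
  interpret K: prob_space K unfolding K_def by (rule measure_pmf.prob_space_axioms)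
  interpret MK: pair_prob_space M K by unfold_locales
  have A': "A \<in> sets (M \<Otimes>\<^sub>M K)" using A unfolding K_def I_def by simp
  define C where "C = space (M \<Otimes>\<^sub>M K) - A"
  have C: "C \<in> sets (M \<Otimes>\<^sub>M K)" unfolding C_def using A' by auto
  have mC: "measure (M \<Otimes>\<^sub>M K) C \<le> \<delta>"
    using MK.P.prob_compl[OF A'] A unfolding C_def K_def I_def by simp
  define g where "g = (\<lambda>Z. measure K (Pair Z -` C))"
  have sK: "space K = UNIV" unfolding K_def by simp
  have gZ: "g Z = real (card {\<pi>\<in>I. (Z, \<pi>) \<notin> A}) / real (fact n)" if Z: "Z \<in> space M" for Z
  proof -
    have "Pair Z -` C = {\<pi>. (Z, \<pi>) \<notin> A}" using Z unfolding C_def by (auto simp: space_pair_measure sK)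
    moreover have "I \<inter> {\<pi>. (Z, \<pi>) \<notin> A} = {\<pi>\<in>I. (Z, \<pi>) \<notin> A}" by auto
    ultimately show ?thesis unfolding g_def K_def
      using measure_pmf_of_set[OF fI(2) fI(1), of "{\<pi>. (Z, \<pi>) \<notin> A}"]
      by (simp add: I_def perms_card)
  qed
  have gm: "g \<in> borel_measurable M"
  proof -
    have "(\<lambda>Z. emeasure K (Pair Z -` C)) \<in> borel_measurable M"
      by (rule K.measurable_emeasure_Pair[OF C])
    then have "(\<lambda>Z. enn2real (emeasure K (Pair Z -` C))) \<in> borel_measurable M" by measurable
    then show ?thesis unfolding g_def measure_def .
  qed
  have gb: "0 \<le> g Z" "g Z \<le> 1" for Z unfolding g_def by auto
  have gi: "integrable M g" by (rule M.integrable_const_bound[where B=1]) (use gb gm in auto)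
  have "emeasure (M \<Otimes>\<^sub>M K) C = (\<integral>\<^sup>+Z. emeasure K (Pair Z -` C) \<partial>M)"
    by (rule K.emeasure_pair_measure_alt[OF C])
  also have "\<dots> = (\<integral>\<^sup>+Z. ennreal (g Z) \<partial>M)" unfolding g_def
    by (simp add: K.emeasure_eq_measure)
  also have "\<dots> = ennreal (integral\<^sup>L M g)"
    by (rule nn_integral_eq_integral[OF gi]) (use gb in auto)
  finally have "measure (M \<Otimes>\<^sub>M K) C = integral\<^sup>L M g"
    by (simp add: MK.P.emeasure_eq_measure Bochner_Integration.integral_nonneg gb)
  with mC have ig: "integral\<^sup>L M g \<le> \<delta>" by simp
  have mk: "measure M {Z\<in>space M. g Z \<ge> \<gamma>} \<le> integral\<^sup>L M g / \<gamma>"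
    by (rule integral_Markov_inequality_measure[OF gi _ _ g0, of "space M"]) (use gb in auto)
  define B where "B = space M - {Z\<in>space M. g Z \<ge> \<gamma>}"
  have mg: "{Z\<in>space M. g Z \<ge> \<gamma>} \<in> sets M" using gm by measurable
  have Bs: "B \<in> sets M" unfolding B_def using mg by auto
  have "measure M B = 1 - measure M {Z\<in>space M. g Z \<ge> \<gamma>}"
    unfolding B_def by (rule M.prob_compl[OF mg])
  moreover have "integral\<^sup>L M g / \<gamma> \<le> \<delta> / \<gamma>" using ig g0 by (simp add: divide_right_mono)
  ultimately have mB: "measure M B \<ge> 1 - \<delta>/\<gamma>" using mk by linarith
  have "real (card {\<pi>\<in>perms n. (Z, \<pi>) \<notin> A}) \<le> \<gamma> * fact n" if Z: "Z \<in> B" for Z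
  proof -
    have "g Z < \<gamma>" "Z \<in> space M" using Z unfolding B_def by auto
    then have "real (card {\<pi>\<in>I. (Z, \<pi>) \<notin> A}) / real (fact n) < \<gamma>" using gZ by simp
    then show ?thesis unfolding I_def by (simp add: divide_less_eq)
  qed
  then show ?thesis using Bs mB by blast
qed

lemma cdf_hit:
  assumes G: "cont_strict_cdf G" and c: "0 < c" "c < 1"
  shows "\<exists>y. G y = c"
proof -
  have cont: "continuous_on UNIV G" and sm: "strict_mono G"
    and l0: "(G \<longlongrightarrow> 0) at_bot" and l1: "(G \<longlongrightarrow> 1) at_top"
    using G unfolding cont_strict_cdf_def by auto
  have "eventually (\<lambda>x. G x < c) at_bot" using order_tendstoD(2)[OF l0 c(1)] .
  then obtain a where a: "G a < c" by (auto simp: eventually_at_bot_linorder)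
  have "eventually (\<lambda>x. G x > c) at_top" using order_tendstoD(1)[OF l1 c(2)] .
  then obtain b where b: "G b > c" by (auto simp: eventually_at_top_linorder)
  have ab: "a \<le> b"
  proof (rule ccontr)
    assume "\<not> a \<le> b" then have "G b < G a" using sm by (simp add: strict_mono_less)
    then show False using a b by simp
  qed
  have "continuous_on {a..b} G" using cont by (rule continuous_on_subset) simp
  from IVT'[of G a c b, OF _ _ ab this] a b show ?thesis by auto
qed

lemma prob_compl_int:
  assumes "prob_space M" "A \<in> sets M" "B \<in> sets M"
  shows "measure M (space M - (A \<inter> B)) \<le> measure M (space M - A) + measure M (space M - B)"
proof -
  interpret prob_space M by fact
  have "space M - (A \<inter> B) = (space M - A) \<union> (space M - B)" by auto
  then show ?thesis using assms by (simp add: measure_Un_le)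
qed

lemma per_n:
  fixes T :: "nat \<Rightarrow> (nat \<Rightarrow> 'a::topological_space) \<Rightarrow> real"
    and F :: "nat \<Rightarrow> (nat \<Rightarrow> 'a) \<Rightarrow> real \<Rightarrow> real"
  assumes Mp: "prob_space (data_law P nn n)"
    and Ms: "sets (data_law P nn n) = sets (PiM {..<n} (\<lambda>_. borel))"
    and T: "T n \<in> borel_measurable (PiM {..<n} (\<lambda>_. borel))"
    and F: "(\<lambda>(Z, x). F n Z x) \<in> borel_measurable (PiM {..<n} (\<lambda>_. borel) \<Otimes>\<^sub>M borel)"
    and al: "0 < \<alpha>" "\<alpha> < 1" and u: "u = 1 - \<alpha>" and eps: "0 < \<epsilon>"
    and A1: "A1 \<in> sets (data_law P nn n)" "measure (data_law P nn n) A1 \<ge> 1 - \<epsilon>"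
      "\<forall>Z\<in>A1. \<forall>x. \<bar>F n Z x - H_Tn P nn T n x\<bar> \<le> \<epsilon>"
    and A2: "A2 \<in> sets (data_law P nn n)" "measure (data_law P nn n) A2 \<ge> 1 - \<epsilon>"
      "\<forall>Z\<in>A2. \<bar>R_Tn T n Z y1 - (u - 2*\<epsilon>)\<bar> \<le> \<epsilon>/2"
    and A3: "A3 \<in> sets (data_law P nn n)" "measure (data_law P nn n) A3 \<ge> 1 - \<epsilon>"
      "\<forall>Z\<in>A3. \<bar>R_Tn T n Z y3 - (u + \<epsilon>)\<bar> \<le> \<epsilon>/2"
    and A4: "A4 \<in> sets (data_perm_law P nn n)" "measure (data_perm_law P nn n) A4 \<ge> 1 - \<epsilon> * (\<epsilon>/2)"
      "\<forall>\<omega>\<in>A4. \<forall>x. \<bar>F n (fst \<omega> \<circ> snd \<omega>) x - R_Tn T n (fst \<omega>) x\<bar> \<le> \<epsilon>"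
    and H2: "\<bar>H_Tn P nn T n y2 - (u - 6*\<epsilon>)\<bar> < \<epsilon>"
    and H4: "\<bar>H_Tn P nn T n y4 - (u + 5*\<epsilon>)\<bar> < \<epsilon>"
  shows "\<bar>integral\<^sup>L (data_law P nn n) (phi_Fn F T \<alpha> n) - \<alpha>\<bar> \<le> 11 * \<epsilon>"
proof -
  define M where "M = data_law P nn n"
  interpret M: prob_space M unfolding M_def by (rule Mp)
  have Ms': "sets M = sets (PiM {..<n} (\<lambda>_. borel))" unfolding M_def by (rule Ms)
  have Tm: "T n \<in> borel_measurable M" using T measurable_cong_sets[OF Ms' refl] by blast
  have phim: "phi_Fn F T \<alpha> n \<in> borel_measurable M"
    using phi_meas[of T n F, OF T F al] measurable_cong_sets[OF Ms' refl] by blast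
  have e2: "\<epsilon> * (\<epsilon> / 2) / (\<epsilon> / 2) = \<epsilon>" using eps by simp
  obtain B where B: "B \<in> sets M" "measure M B \<ge> 1 - \<epsilon>"
    "\<forall>Z\<in>B. real (card {\<pi>\<in>perms n. (Z, \<pi>) \<notin> A4}) \<le> (\<epsilon>/2) * fact n"
    using perm_markov[OF Mp A4(1)[unfolded data_perm_law_def] A4(2)[unfolded data_perm_law_def], of "\<epsilon>/2"] eps
    unfolding M_def e2 by auto
  have bad: "real (card {\<pi>\<in>perms n. \<exists>x. \<bar>F n (Z\<circ>\<pi>) x - R_Tn T n Z x\<bar> > \<epsilon>}) \<le> (\<epsilon>/2) * fact n"
    if Z: "Z \<in> B" for Z
  proof -
    have "{\<pi>\<in>perms n. \<exists>x. \<bar>F n (Z\<circ>\<pi>) x - R_Tn T n Z x\<bar> > \<epsilon>} \<subseteq> {\<pi>\<in>perms n. (Z, \<pi>) \<notin> A4}"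
    proof (intro subsetI CollectI conjI)
      fix \<pi> assume "\<pi> \<in> {\<pi>\<in>perms n. \<exists>x. \<bar>F n (Z\<circ>\<pi>) x - R_Tn T n Z x\<bar> > \<epsilon>}"
      then obtain x where "\<pi> \<in> perms n" "\<bar>F n (Z\<circ>\<pi>) x - R_Tn T n Z x\<bar> > \<epsilon>" by auto
      then show "\<pi> \<in> perms n" by simp
      show "(Z, \<pi>) \<notin> A4"
      proof
        assume "(Z, \<pi>) \<in> A4"
        then have "\<bar>F n (fst (Z, \<pi>) \<circ> snd (Z, \<pi>)) x - R_Tn T n (fst (Z, \<pi>)) x\<bar> \<le> \<epsilon>" using A4(3) by blast
        then show False using \<open>\<bar>F n (Z\<circ>\<pi>) x - R_Tn T n Z x\<bar> > \<epsilon>\<close> by simp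
      qed
    qed
    then have "card {\<pi>\<in>perms n. \<exists>x. \<bar>F n (Z\<circ>\<pi>) x - R_Tn T n Z x\<bar> > \<epsilon>} \<le> card {\<pi>\<in>perms n. (Z, \<pi>) \<notin> A4}"
      by (intro card_mono) (auto simp: perms_finite)
    then show ?thesis using B(3) Z by (meson of_nat_le_iff order_trans)
  qed
  define E where "E = A1 \<inter> (A2 \<inter> (A3 \<inter> B))"
  have A1': "A1 \<in> sets M" and A2': "A2 \<in> sets M" and A3': "A3 \<in> sets M"
    using A1 A2 A3 unfolding M_def by auto
  have Es: "E \<in> sets M" unfolding E_def using A1' A2' A3' B by auto
  have cE: "measure M (space M - E) \<le> 4 * \<epsilon>"
  proof -
    have "measure M (space M - E) \<le> measure M (space M - A1) + (measure M (space M - A2) +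
        (measure M (space M - A3) + measure M (space M - B)))"
      unfolding E_def
      using prob_compl_int[OF M.prob_space_axioms A1' , of "A2 \<inter> (A3 \<inter> B)"]
        prob_compl_int[OF M.prob_space_axioms A2' , of "A3 \<inter> B"]
        prob_compl_int[OF M.prob_space_axioms A3' B(1)] A2' A3' B(1) by auto
    also have "\<dots> \<le> 4 * \<epsilon>"
      using M.prob_compl[OF A1'] M.prob_compl[OF A2'] M.prob_compl[OF A3'] M.prob_compl[OF B(1)]
        A1(2) A2(2) A3(2) B(2) unfolding M_def by linarith
    finally show ?thesis .
  qed
  define S where "S = {Z\<in>space M. phi_Fn F T \<alpha> n Z = 1}"
  have Ss: "S \<in> sets M" unfolding S_def using phim by measurable
  have "integral\<^sup>L M (phi_Fn F T \<alpha> n) = integral\<^sup>L M (indicator S)"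
    by (rule Bochner_Integration.integral_cong) (auto simp: S_def phi_Fn_def indicator_def)
  also have "\<dots> = measure M S" using Ss by (simp add: Int_absorb2 sets.sets_into_space)
  finally have intS: "integral\<^sup>L M (phi_Fn F T \<alpha> n) = measure M S" .
  have Hdef: "H_Tn P nn T n x = measure M {Z\<in>space M. T n Z \<le> x}" for x
    unfolding H_Tn_def M_def ..
  have Hmono: "H_Tn P nn T n x \<le> H_Tn P nn T n x'" if "x \<le> x'" for x x'
    unfolding Hdef using that Tm by (intro M.finite_measure_mono) (auto, measurable)
  have Hgt: "measure M {Z\<in>space M. x < T n Z} = 1 - H_Tn P nn T n x" for x
  proof -
    have "{Z\<in>space M. x < T n Z} = space M - {Z\<in>space M. T n Z \<le> x}" by auto
    moreover have "{Z\<in>space M. T n Z \<le> x} \<in> sets M" using Tm by measurable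
    ultimately show ?thesis unfolding Hdef using M.prob_compl by simp
  qed
  have Gs: "{Z\<in>space M. x < T n Z} \<in> sets M" for x using Tm by measurable
  have EA: "Z \<in> A1" "Z \<in> A2" "Z \<in> A3" "Z \<in> B" if "Z \<in> E" for Z using that unfolding E_def by auto
  have up: "S \<subseteq> (space M - E) \<union> {Z\<in>space M. y2 < T n Z}"
  proof
    fix Z assume Z: "Z \<in> S"
    show "Z \<in> (space M - E) \<union> {Z\<in>space M. y2 < T n Z}"
    proof (cases "Z \<in> E")
      case True
      have V: "F n Z (T n Z) > u - 4*\<epsilon>"
        by (rule det_upper[where s="\<epsilon>/2" and \<gamma>="\<epsilon>/2" and yy=y1 and Z=Z and F=F and T=T and n=n, OF u al eps])
          (use Z True EA A2(3) bad in \<open>auto simp: S_def\<close>)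
      have "\<bar>F n Z (T n Z) - H_Tn P nn T n (T n Z)\<bar> \<le> \<epsilon>" using A1(3) EA(1)[OF True] by blast
      then have "H_Tn P nn T n (T n Z) > u - 5*\<epsilon>" using V by linarith
      then have "\<not> T n Z \<le> y2" using Hmono[of "T n Z" y2] H2 by linarith
      then show ?thesis using Z unfolding S_def by auto
    qed (use Z S_def in auto)
  qed
  have lo: "E \<inter> {Z\<in>space M. y4 < T n Z} \<subseteq> S"
  proof
    fix Z assume Z: "Z \<in> E \<inter> {Z\<in>space M. y4 < T n Z}"
    then have ZE: "Z \<in> E" and Zs: "Z \<in> space M" and Ty: "y4 < T n Z" by auto
    have "H_Tn P nn T n y4 \<le> H_Tn P nn T n (T n Z)" using Hmono Ty by simp
    moreover have "\<bar>F n Z (T n Z) - H_Tn P nn T n (T n Z)\<bar> \<le> \<epsilon>" using A1(3) EA(1)[OF ZE] by blast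
    ultimately have V: "F n Z (T n Z) > u + 3*\<epsilon>" using H4 by linarith
    have "phi_Fn F T \<alpha> n Z = 1"
      by (rule det_lower[where s="\<epsilon>/2" and \<gamma>="\<epsilon>/2" and yy=y3 and Z=Z and F=F and T=T and n=n, OF u al eps])
        (use ZE EA A3(3) bad V in auto)
    then show "Z \<in> S" unfolding S_def using Zs by simp
  qed
  have "measure M S \<le> measure M ((space M - E) \<union> {Z\<in>space M. y2 < T n Z})"
    using up Es Gs by (intro M.finite_measure_mono) auto
  also have "\<dots> \<le> measure M (space M - E) + measure M {Z\<in>space M. y2 < T n Z}"
    using Es Gs by (intro measure_Un_le) auto
  finally have s1: "measure M S \<le> \<alpha> + 11 * \<epsilon>" using cE Hgt[of y2] H2 u by linarith
  have "measure M {Z\<in>space M. y4 < T n Z} \<le> measure M ((E \<inter> {Z\<in>space M. y4 < T n Z}) \<union> (space M - E))"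
    using Es Gs by (intro M.finite_measure_mono) auto
  also have "\<dots> \<le> measure M (E \<inter> {Z\<in>space M. y4 < T n Z}) + measure M (space M - E)"
    using Es Gs by (intro measure_Un_le) auto
  also have "measure M (E \<inter> {Z\<in>space M. y4 < T n Z}) \<le> measure M S"
    using lo Ss by (intro M.finite_measure_mono) auto
  finally have s2: "measure M S \<ge> \<alpha> - 10 * \<epsilon>" using cE Hgt[of y4] H4 u by linarith
  show ?thesis using s1 s2 intS unfolding M_def by linarith
qed

theorem mainTheorem3:
  fixes k :: nat
    and nn :: "nat \<Rightarrow> nat \<Rightarrow> nat"
    and p :: "nat \<Rightarrow> real"
    and \<theta> :: "(real ^ 'd) measure \<Rightarrow> real ^ 'e"
    and T :: "nat \<Rightarrow> (nat \<Rightarrow> real ^ 'd) \<Rightarrow> real"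
    and F :: "nat \<Rightarrow> (nat \<Rightarrow> real ^ 'd) \<Rightarrow> real \<Rightarrow> real"
    and \<A> :: "(nat \<Rightarrow> (real ^ 'd) measure) set"
    and R_T H_T :: "(nat \<Rightarrow> (real ^ 'd) measure) \<Rightarrow> real \<Rightarrow> real"
    and \<alpha> :: real
  assumes sizes: "\<And>n. (\<Sum>i<k. nn n i) = n"
    and props: "\<And>i. i < k \<Longrightarrow> (\<lambda>n. real (nn n i) / real n) \<longlonglongrightarrow> p i"
    and props_pos: "\<And>i. i < k \<Longrightarrow> 0 < p i \<and> p i < 1"
    and T_meas: "\<And>n. T n \<in> borel_measurable (PiM {..<n} (\<lambda>_. borel))"
    and F_meas: "\<And>n. (\<lambda>(Z, x). F n Z x) \<in> borel_measurable (PiM {..<n} (\<lambda>_. borel) \<Otimes>\<^sub>M borel)"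
    and distrs: "\<And>P i. P \<in> \<A> \<Longrightarrow> i < k \<Longrightarrow> prob_space (P i) \<and> sets (P i) = sets borel"
    and null: "\<And>P i j. P \<in> \<A> \<Longrightarrow> i < k \<Longrightarrow> j < k \<Longrightarrow> \<theta> (P i) = \<theta> (P j)"
    and R_T_cdf: "\<And>P. P \<in> \<A> \<Longrightarrow> cont_strict_cdf (R_T P)"
    and H_T_cdf: "\<And>P. P \<in> \<A> \<Longrightarrow> cont_strict_cdf (H_T P)"
    and H_T_lim: "\<And>P x. P \<in> \<A> \<Longrightarrow> (\<lambda>n. H_Tn P nn T n x) \<longlonglongrightarrow> H_T P x"
    and R_T_lim: "\<And>P x. P \<in> \<A> \<Longrightarrow>
        conv_in_prob (\<lambda>n. data_law P nn n) (\<lambda>n Z. R_Tn T n Z x) (R_T P x)"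
    and F_H: "\<And>P. P \<in> \<A> \<Longrightarrow>
        sup_conv0_in_prob (\<lambda>n. data_law P nn n) (\<lambda>n Z x. F n Z x - H_Tn P nn T n x)"
    and F_R: "\<And>P. P \<in> \<A> \<Longrightarrow>
        sup_conv0_in_prob (\<lambda>n. data_perm_law P nn n)
          (\<lambda>n \<omega> x. F n (fst \<omega> \<circ> snd \<omega>) x - R_Tn T n (fst \<omega>) x)"
    and alpha: "0 < \<alpha>" "\<alpha> < 1"
  shows "\<forall>P\<in>\<A>. (\<lambda>n. integral\<^sup>L (data_law P nn n) (phi_Fn F T \<alpha> n)) \<longlonglongrightarrow> \<alpha>"
proof
  fix P assume P: "P \<in> \<A>"
  have d: "\<And>i. i < k \<Longrightarrow> prob_space (P i) \<and> sets (P i) = sets borel" using distrs P by blast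
  have Mp: "prob_space (data_law P nn n)" for n by (rule data_law_props(2)[of nn n k P, OF sizes d])
  have Ms: "sets (data_law P nn n) = sets (PiM {..<n} (\<lambda>_. borel))" for n
    by (rule data_law_props(1)[of nn n k P, OF sizes d])
  define u where "u = 1 - \<alpha>"
  have u01: "0 < u" "u < 1" using alpha unfolding u_def by auto
  show "(\<lambda>n. integral\<^sup>L (data_law P nn n) (phi_Fn F T \<alpha> n)) \<longlonglongrightarrow> \<alpha>"
    unfolding tendsto_iff dist_real_def
  proof (intro allI impI)
    fix e :: real assume e: "0 < e"
    define \<epsilon> where "\<epsilon> = min (e/12) (min u \<alpha> / 8)"
    have eps: "0 < \<epsilon>" "\<epsilon> \<le> e/12" "\<epsilon> \<le> u/8" "\<epsilon> \<le> \<alpha>/8" using e u01 alpha unfolding \<epsilon>_def by auto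
    obtain y1 where y1: "R_T P y1 = u - 2*\<epsilon>" using cdf_hit[OF R_T_cdf[OF P], of "u - 2*\<epsilon>"] eps u01 by auto
    obtain y3 where y3: "R_T P y3 = u + \<epsilon>" using cdf_hit[OF R_T_cdf[OF P], of "u + \<epsilon>"] eps u01 alpha u_def by auto
    obtain y2 where y2: "H_T P y2 = u - 6*\<epsilon>" using cdf_hit[OF H_T_cdf[OF P], of "u - 6*\<epsilon>"] eps u01 by auto
    obtain y4 where y4: "H_T P y4 = u + 5*\<epsilon>" using cdf_hit[OF H_T_cdf[OF P], of "u + 5*\<epsilon>"] eps u01 alpha u_def by auto
    have ev1: "eventually (\<lambda>n. \<exists>A\<in>sets (data_law P nn n). measure (data_law P nn n) A \<ge> 1 - \<epsilon> \<and>
        (\<forall>Z\<in>A. \<forall>x. \<bar>F n Z x - H_Tn P nn T n x\<bar> \<le> \<epsilon>)) sequentially"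
      using F_H[OF P] eps unfolding sup_conv0_in_prob_def by blast
    have ev2: "eventually (\<lambda>n. \<exists>A\<in>sets (data_law P nn n). measure (data_law P nn n) A \<ge> 1 - \<epsilon> \<and>
        (\<forall>Z\<in>A. \<bar>R_Tn T n Z y1 - (u - 2*\<epsilon>)\<bar> \<le> \<epsilon>/2)) sequentially"
      using R_T_lim[OF P, of y1] eps unfolding conv_in_prob_def y1 by (meson half_gt_zero)
    have ev3: "eventually (\<lambda>n. \<exists>A\<in>sets (data_law P nn n). measure (data_law P nn n) A \<ge> 1 - \<epsilon> \<and>
        (\<forall>Z\<in>A. \<bar>R_Tn T n Z y3 - (u + \<epsilon>)\<bar> \<le> \<epsilon>/2)) sequentially"
      using R_T_lim[OF P, of y3] eps unfolding conv_in_prob_def y3 by (meson half_gt_zero)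
    have ev4: "eventually (\<lambda>n. \<exists>A\<in>sets (data_perm_law P nn n). measure (data_perm_law P nn n) A \<ge> 1 - \<epsilon> * (\<epsilon>/2) \<and>
        (\<forall>\<omega>\<in>A. \<forall>x. \<bar>F n (fst \<omega> \<circ> snd \<omega>) x - R_Tn T n (fst \<omega>) x\<bar> \<le> \<epsilon>)) sequentially"
    proof -
      have "\<epsilon> * (\<epsilon>/2) > 0" using eps by simp
      then show ?thesis using F_R[OF P] eps unfolding sup_conv0_in_prob_def by blast
    qed
    have ev5: "eventually (\<lambda>n. \<bar>H_Tn P nn T n y2 - (u - 6*\<epsilon>)\<bar> < \<epsilon>) sequentially"
      using tendstoD[OF H_T_lim[OF P, of y2] eps(1)] unfolding y2 dist_real_def .
    have ev6: "eventually (\<lambda>n. \<bar>H_Tn P nn T n y4 - (u + 5*\<epsilon>)\<bar> < \<epsilon>) sequentially"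
      using tendstoD[OF H_T_lim[OF P, of y4] eps(1)] unfolding y4 dist_real_def .
    show "eventually (\<lambda>n. \<bar>integral\<^sup>L (data_law P nn n) (phi_Fn F T \<alpha> n) - \<alpha>\<bar> < e) sequentially"
      using ev1 ev2 ev3 ev4 ev5 ev6
    proof eventually_elim
      case (elim n)
      from elim(1) obtain A1 where A1: "A1 \<in> sets (data_law P nn n)" "measure (data_law P nn n) A1 \<ge> 1 - \<epsilon>"
        "\<forall>Z\<in>A1. \<forall>x. \<bar>F n Z x - H_Tn P nn T n x\<bar> \<le> \<epsilon>" by blast
      from elim(2) obtain A2 where A2: "A2 \<in> sets (data_law P nn n)" "measure (data_law P nn n) A2 \<ge> 1 - \<epsilon>"
        "\<forall>Z\<in>A2. \<bar>R_Tn T n Z y1 - (u - 2*\<epsilon>)\<bar> \<le> \<epsilon>/2" by blast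
      from elim(3) obtain A3 where A3: "A3 \<in> sets (data_law P nn n)" "measure (data_law P nn n) A3 \<ge> 1 - \<epsilon>"
        "\<forall>Z\<in>A3. \<bar>R_Tn T n Z y3 - (u + \<epsilon>)\<bar> \<le> \<epsilon>/2" by blast
      from elim(4) obtain A4 where A4: "A4 \<in> sets (data_perm_law P nn n)" "measure (data_perm_law P nn n) A4 \<ge> 1 - \<epsilon> * (\<epsilon>/2)"
        "\<forall>\<omega>\<in>A4. \<forall>x. \<bar>F n (fst \<omega> \<circ> snd \<omega>) x - R_Tn T n (fst \<omega>) x\<bar> \<le> \<epsilon>" by blast
      have "\<bar>integral\<^sup>L (data_law P nn n) (phi_Fn F T \<alpha> n) - \<alpha>\<bar> \<le> 11 * \<epsilon>"
        by (rule per_n[where T=T and F=F and n=n and P=P and nn=nn, OF Mp[of n] Ms[of n] T_meas[of n] F_meas[of n] alpha u_def eps(1) A1 A2 A3 A4 elim(5) elim(6)])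
      then show ?case using eps e by linarith
    qed
  qed
qed

end
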